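(* For any group $H$, the set $\mathcal E_H=\{G\in\mathcal G:\ H\text{ is embeddable into }\overline G\}$ is analytic in $\mathcal G$; therefore it is either meager or comeager in $\mathcal G$.
   Context: Let $\mathbb N=\{1,2,3,\dots\}$. Equip $\mathbb N^{\mathbb N\times\mathbb N}$ with the product topology of the discrete topology on $\mathbb N$. Let $\mathcal G$ be the (Polish) subspace consisting of those $A\in\mathbb N^{\mathbb N\times\mathbb N}$ that are the multiplication table of a group on the underlying set $\mathbb N$ whose identity element is $1$. For $G\in\mathcal G$, $\overline G$ denotes the group on $\mathbb N$ with multiplication table $G$. A subset of a Polish space $Y$ is analytic if it is a continuous image of a Borel subset of a Polish space. *)

theory Defs
  imports "HOL-Analysis.Analysis" "HOL-Algebra.Group"
begin

text \<open>Encoding: the paper's underlying set N = {1,2,3,...} is represented by the type nat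
  via the bijection n |-> n - 1; so the paper's identity 1 becomes 0 here.
  The space N^(N x N) is the function type (nat \<times> nat \<Rightarrow> nat), whose topology
  (Function_Topology) is the product topology, nat carrying its (discrete) order topology.\<close>

definition table_group :: "(nat \<times> nat \<Rightarrow> nat) \<Rightarrow> nat monoid" where
  "table_group A = \<lparr>carrier = UNIV, mult = (\<lambda>x y. A (x, y)), one = 0\<rparr>"

definition group_tables :: "(nat \<times> nat \<Rightarrow> nat) set" where
  "group_tables = {A. group (table_group A)}"

definition embeddable :: "('h, 'c) monoid_scheme \<Rightarrow> ('g, 'd) monoid_scheme \<Rightarrow> bool" where
  "embeddable H G \<longleftrightarrow> (\<exists>f. f \<in> hom H G \<and> inj_on f (carrier H))"

definition Polish_space :: "'a topology \<Rightarrow> bool" where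
  "Polish_space X \<longleftrightarrow> completely_metrizable_space X \<and> separable_space X"

definition borel_sets_of :: "'a topology \<Rightarrow> 'a set set" where
  "borel_sets_of X = sigma_sets (topspace X) {U. openin X U}"

text \<open>Every Polish space is homeomorphic to a (closed) subspace of R^N, so it suffices to
  range over Polish topologies whose points lie in the type nat \<Rightarrow> real.\<close>
definition analytic_in :: "'b topology \<Rightarrow> 'b set \<Rightarrow> bool" where
  "analytic_in Y S \<longleftrightarrow>
     (\<exists>(X :: (nat \<Rightarrow> real) topology) B f.
        Polish_space X \<and> B \<in> borel_sets_of X \<and>
        continuous_map (subtopology X B) Y f \<and> f ` B = S)"

definition nowhere_dense_in :: "'a topology \<Rightarrow> 'a set \<Rightarrow> bool" where
  "nowhere_dense_in X A \<longleftrightarrow> A \<subseteq> topspace X \<and> X interior_of (X closure_of A) = {}"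

definition meager_in :: "'a topology \<Rightarrow> 'a set \<Rightarrow> bool" where
  "meager_in X A \<longleftrightarrow> A \<subseteq> topspace X \<and>
     (\<exists>F. countable F \<and> (\<forall>N\<in>F. nowhere_dense_in X N) \<and> A \<subseteq> \<Union>F)"

definition comeager_in :: "'a topology \<Rightarrow> 'a set \<Rightarrow> bool" where
  "comeager_in X A \<longleftrightarrow> A \<subseteq> topspace X \<and> meager_in X (topspace X - A)"

end

theory Submission
  imports Defs
begin


lemma meager_empty: "meager_in Y {}"
  unfolding meager_in_def by (rule conjI, simp, rule exI[of _ "{}"], simp)

lemma meager_subset:
  assumes "meager_in Y B" "A \<subseteq> B" shows "meager_in Y A"
proof -
  obtain F where F: "B \<subseteq> topspace Y" "countable F" "\<forall>N\<in>F. nowhere_dense_in Y N" "B \<subseteq> \<Union>F"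
    using assms(1) unfolding meager_in_def by (elim conjE exE) simp
  have "A \<subseteq> topspace Y \<and> countable F \<and> (\<forall>N\<in>F. nowhere_dense_in Y N) \<and> A \<subseteq> \<Union>F"
    using F assms(2) by (simp add: order_trans)
  then show ?thesis unfolding meager_in_def by (rule conjE, elim conjE, intro conjI exI) 
qed

lemma meager_Union:
  assumes "countable \<A>" "\<And>A. A \<in> \<A> \<Longrightarrow> meager_in Y A"
  shows "meager_in Y (\<Union>\<A>)"
proof -
  have "\<forall>A\<in>\<A>. \<exists>F. countable F \<and> (\<forall>N\<in>F. nowhere_dense_in Y N) \<and> A \<subseteq> \<Union>F"
    using assms(2) unfolding meager_in_def by blast
  then have "\<exists>F. \<forall>A\<in>\<A>. countable (F A) \<and> (\<forall>N\<in>F A. nowhere_dense_in Y N) \<and> A \<subseteq> \<Union>(F A)"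
    by (rule bchoice)
  then obtain F where F0: "\<forall>A\<in>\<A>. countable (F A) \<and> (\<forall>N\<in>F A. nowhere_dense_in Y N) \<and> A \<subseteq> \<Union>(F A)"
    by (elim exE)
  have F: "countable (F A)" "\<forall>N\<in>F A. nowhere_dense_in Y N" "A \<subseteq> \<Union>(F A)" if "A \<in> \<A>" for A
    using F0 that by blast+
  show ?thesis unfolding meager_in_def
  proof (intro conjI exI[of _ "\<Union>A\<in>\<A>. F A"])
    show "\<Union>\<A> \<subseteq> topspace Y" using assms(2) unfolding meager_in_def by blast
    show "countable (\<Union>A\<in>\<A>. F A)" using assms(1) F by blast
    show "\<forall>N\<in>\<Union>A\<in>\<A>. F A. nowhere_dense_in Y N" using F(2) by blast
    show "\<Union>\<A> \<subseteq> \<Union>(\<Union>A\<in>\<A>. F A)" using F(3) by blast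
  qed
qed

lemma meager_Un:
  assumes "meager_in Y A" "meager_in Y B" shows "meager_in Y (A \<union> B)"
proof -
  have "meager_in Y (\<Union>{A,B})" by (rule meager_Union) (use assms in auto)
  then show ?thesis by simp
qed

lemma meager_UN:
  assumes "countable I" "\<And>i. i \<in> I \<Longrightarrow> meager_in Y (A i)"
  shows "meager_in Y (\<Union>i\<in>I. A i)"
  by (rule meager_Union) (use assms in auto)

lemma nowhere_dense_meager: "nowhere_dense_in Y A \<Longrightarrow> meager_in Y A"
  unfolding meager_in_def
  by (rule conjI, simp add: nowhere_dense_in_def, rule exI[of _ "{A}"], simp)

lemma nowhere_dense_iff:
  "nowhere_dense_in Y A \<longleftrightarrow> A \<subseteq> topspace Y \<and>
     (\<forall>W. openin Y W \<and> W \<subseteq> Y closure_of A \<longrightarrow> W = {})"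
  unfolding nowhere_dense_in_def interior_of_eq_empty[of Y "Y closure_of A"] by (rule refl)

lemma open_sub_closure_meets:
  assumes "openin Y W" "W \<subseteq> Y closure_of A" "W \<noteq> {}"
  shows "W \<inter> A \<noteq> {}"
  using openin_Int_closure_of_eq_empty[OF assms(1), of A] assms(2,3) by blast

lemma closed_nowhere_dense:
  assumes "closedin Y C" "Y interior_of C = {}"
  shows "nowhere_dense_in Y C"
  using assms closure_of_eq[of Y C] closedin_subset[of Y C] unfolding nowhere_dense_in_def by simp

lemma boundary_nowhere_dense:
  assumes "closedin Y C"
  shows "nowhere_dense_in Y (C - Y interior_of C)"
  unfolding nowhere_dense_iff
proof (intro conjI allI impI)
  show "C - Y interior_of C \<subseteq> topspace Y" using closedin_subset[OF assms] by blast
  fix W assume W: "openin Y W \<and> W \<subseteq> Y closure_of (C - Y interior_of C)"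
  have "Y closure_of (C - Y interior_of C) \<subseteq> C"
    by (simp add: assms closure_of_minimal)
  with W have "W \<subseteq> Y interior_of C" by (meson interior_of_maximal order.trans)
  then show "W = {}" using open_sub_closure_meets[of Y W "C - Y interior_of C"] W by blast
qed

lemma Baire_nonmeager:
  assumes Y: "completely_metrizable_space Y" and U: "openin Y U" "U \<noteq> {}"
  shows "\<not> meager_in Y U"
proof
  assume "meager_in Y U"
  then obtain F where F: "countable F" "\<And>N. N \<in> F \<Longrightarrow> nowhere_dense_in Y N" "U \<subseteq> \<Union>F"
    unfolding meager_in_def by blast
  have I0: "Y interior_of \<Union>((\<lambda>N. Y closure_of N) ` F) = {}"
  proof (rule Baire_category_alt)
    show "countable ((\<lambda>N. Y closure_of N) ` F)" using F(1) by blast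
    fix T assume "T \<in> (\<lambda>N. Y closure_of N) ` F"
    then obtain N where N: "N \<in> F" "T = Y closure_of N" by blast
    have "Y interior_of T = {}" using F(2)[OF N(1)] N(2) unfolding nowhere_dense_in_def by simp
    then show "closedin Y T \<and> Y interior_of T = {}" using N(2) by simp
  next
    show "completely_metrizable_space Y \<or> locally_compact_space Y \<and> regular_space Y"
      using Y by simp
  qed
  have U0: "U \<subseteq> \<Union>((\<lambda>N. Y closure_of N) ` F)"
  proof
    fix u assume "u \<in> U"
    then obtain N where N: "N \<in> F" "u \<in> N" using F(3) by blast
    then have "N \<subseteq> topspace Y" using F(2) unfolding nowhere_dense_in_def by blast
    then have "u \<in> Y closure_of N" using closure_of_subset N(2) by blast
    then show "u \<in> \<Union>((\<lambda>N. Y closure_of N) ` F)" using N(1) by blast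
  qed
  have "U \<subseteq> {}" using interior_of_maximal[OF U0 U(1)] I0 by simp
  then show False using U(2) by simp
qed

lemma homeo_nowhere_dense:
  assumes h: "homeomorphic_map Y Y s" and A: "nowhere_dense_in Y A"
  shows "nowhere_dense_in Y (s ` A)"
proof -
  have A1: "A \<subseteq> topspace Y" using A unfolding nowhere_dense_in_def by blast
  have "Y closure_of (s ` A) = s ` (Y closure_of A)"
    using homeomorphic_map_closure_of[OF h A1] .
  moreover have "Y interior_of (s ` (Y closure_of A)) = s ` (Y interior_of (Y closure_of A))"
    using homeomorphic_map_interior_of[OF h closure_of_subset_topspace] .
  moreover have "s ` A \<subseteq> topspace Y"
    using image_mono[OF A1, of s] homeomorphic_imp_surjective_map[OF h] by simp
  ultimately show ?thesis using A unfolding nowhere_dense_in_def by simp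
qed

lemma homeo_meager:
  assumes h: "homeomorphic_map Y Y s" and A: "meager_in Y A"
  shows "meager_in Y (s ` A)"
proof -
  obtain F where F: "countable F" "\<And>N. N \<in> F \<Longrightarrow> nowhere_dense_in Y N" "A \<subseteq> \<Union>F"
    using A unfolding meager_in_def by blast
  show ?thesis unfolding meager_in_def
  proof (intro conjI exI[of _ "(\<lambda>N. s ` N) ` F"])
    have A1: "A \<subseteq> topspace Y" using A unfolding meager_in_def by blast
    show "s ` A \<subseteq> topspace Y"
      using image_mono[OF A1, of s] homeomorphic_imp_surjective_map[OF h] by simp
    show "countable ((\<lambda>N. s ` N) ` F)" using F by blast
    show "\<forall>N\<in>(\<lambda>N. s ` N) ` F. nowhere_dense_in Y N"
    proof
      fix M assume "M \<in> (\<lambda>N. s ` N) ` F"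
      then obtain N where "N \<in> F" "M = s ` N" by blast
      then show "nowhere_dense_in Y M" using F(2) homeo_nowhere_dense[OF h] by simp
    qed
    show "s ` A \<subseteq> \<Union>((\<lambda>N. s ` N) ` F)" using F by blast
  qed
qed



lemma souslin_BP:
  fixes Y :: "'a topology" and b :: "'i::countable \<Rightarrow> 'a set" and A :: "nat list \<Rightarrow> 'a set"
  assumes bopen: "\<And>i. openin Y (b i)"
    and bbase: "\<And>U y. openin Y U \<Longrightarrow> y \<in> U \<Longrightarrow> \<exists>i. y \<in> b i \<and> b i \<subseteq> U"
    and Asub: "\<And>s. A s \<subseteq> topspace Y"
    and Asplit: "\<And>s. A s = (\<Union>i. A (s @ [i]))"
    and Aclos: "\<And>x y. (\<And>n. y \<in> Y closure_of A (map x [0..<n])) \<Longrightarrow> y \<in> A []"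
  shows "\<exists>Q. openin Y Q \<and> meager_in Y (A [] - Q) \<and> meager_in Y (Q - A [])"
proof -
  define Om where "Om S = \<Union>(b ` {i. meager_in Y (b i \<inter> S)})" for S
  have Om_open: "openin Y (Om S)" for S
    unfolding Om_def using bopen by (intro openin_Union) auto
  have Om_meager: "meager_in Y (S \<inter> Om S)" for S
  proof -
    have "S \<inter> Om S = (\<Union>i\<in>{i. meager_in Y (b i \<inter> S)}. b i \<inter> S)"
      unfolding Om_def by blast
    moreover have "meager_in Y (\<Union>i\<in>{i. meager_in Y (b i \<inter> S)}. b i \<inter> S)"
      by (rule meager_UN) auto
    ultimately show ?thesis by simp
  qed
  have Om_point: "y \<in> Om S" if hW: "openin Y W" "y \<in> W" "meager_in Y (W \<inter> S)" for y W S
  proof -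
    obtain i where i: "y \<in> b i" "b i \<subseteq> W" using bbase hW(1,2) by blast
    have "meager_in Y (b i \<inter> S)" using meager_subset[OF hW(3)] i(2) by blast
    then show ?thesis unfolding Om_def using i(1) by blast
  qed
  define B where "B s = Y closure_of (A s) - Om (A s)" for s
  have B_closed: "closedin Y (B s)" for s
    unfolding B_def by (intro closedin_diff closedin_closure_of Om_open)
  have B_cl: "B s \<subseteq> Y closure_of A s" for s unfolding B_def by blast
  define Mm where "Mm s = A s \<inter> Om (A s)" for s
  have Mm_meager: "meager_in Y (Mm s)" for s unfolding Mm_def by (rule Om_meager)
  have A_BM: "A s \<subseteq> B s \<union> Mm s" for s
    unfolding B_def Mm_def using closure_of_subset[OF Asub[of s]] by blast
  define Z where "Z s = B s - (\<Union>i. B (s @ [i]))" for s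
  have Z_nd: "nowhere_dense_in Y (Z s)" for s
    unfolding nowhere_dense_iff
  proof (intro conjI allI impI)
    show "Z s \<subseteq> topspace Y" unfolding Z_def using closedin_subset[OF B_closed[of s]] by blast
    fix V assume V: "openin Y V \<and> V \<subseteq> Y closure_of Z s"
    have clZ: "Y closure_of Z s \<subseteq> B s"
      by (rule closure_of_minimal) (auto simp: Z_def B_closed)
    have Nnd: "nowhere_dense_in Y (V \<inter> B (s @ [i]))" for i
      unfolding nowhere_dense_iff
    proof (intro conjI allI impI)
      show "V \<inter> B (s @ [i]) \<subseteq> topspace Y" using V openin_subset by blast
      fix W assume W: "openin Y W \<and> W \<subseteq> Y closure_of (V \<inter> B (s @ [i]))"
      have W1: "W \<subseteq> B (s @ [i])"
        using W closure_of_minimal[OF _ B_closed[of "s @ [i]"], of "V \<inter> B (s @ [i])"] by blast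
      have W2: "W \<subseteq> Y closure_of V"
        using W closure_of_mono[of "V \<inter> B (s @ [i])" V Y] by blast
      show "W = {}"
      proof (rule ccontr)
        assume "W \<noteq> {}"
        then have "W \<inter> V \<noteq> {}" using open_sub_closure_meets[of Y W V] W W2 by blast
        moreover have "openin Y (W \<inter> V)" using W V by blast
        moreover have "W \<inter> V \<subseteq> Y closure_of Z s" using V by blast
        ultimately have "(W \<inter> V) \<inter> Z s \<noteq> {}" using open_sub_closure_meets[of Y "W \<inter> V" "Z s"] by blast
        then show False using W1 unfolding Z_def by blast
      qed
    qed
    have "V \<inter> A s \<subseteq> (\<Union>i. (V \<inter> B (s @ [i])) \<union> Mm (s @ [i]))"
    proof
      fix a assume a: "a \<in> V \<inter> A s"
      then obtain i where "a \<in> A (s @ [i])" using Asplit[of s] by blast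
      then show "a \<in> (\<Union>i. (V \<inter> B (s @ [i])) \<union> Mm (s @ [i]))"
        using A_BM[of "s @ [i]"] a by blast
    qed
    moreover have "meager_in Y (\<Union>i. (V \<inter> B (s @ [i])) \<union> Mm (s @ [i]))"
      by (rule meager_UN) (auto intro: meager_Un nowhere_dense_meager Nnd Mm_meager)
    ultimately have "meager_in Y (V \<inter> A s)" by (rule meager_subset[rotated])
    then have "V \<subseteq> Om (A s)" using Om_point V by blast
    moreover have "V \<subseteq> B s" using V clZ by blast
    ultimately show "V = {}" unfolding B_def by blast
  qed
  define D where "D = (\<Union>s. Mm s \<union> Z s)"
  have D_meager: "meager_in Y D"
    unfolding D_def by (rule meager_UN) (auto intro: meager_Un nowhere_dense_meager Z_nd Mm_meager)
  have main: "B [] - D \<subseteq> A []"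
  proof
    fix y assume y: "y \<in> B [] - D"
    have step: "\<exists>i. y \<in> B (s @ [i])" if ys: "y \<in> B s" for s
    proof -
      have "y \<notin> Z s" using y unfolding D_def by blast
      then show ?thesis using ys unfolding Z_def by blast
    qed
    define nx where "nx s = (SOME i. y \<in> B (s @ [i]))" for s
    define pre where "pre n = rec_nat [] (\<lambda>n p. p @ [nx p]) n" for n
    have pre0: "pre 0 = []" and preS: "pre (Suc n) = pre n @ [nx (pre n)]" for n
      unfolding pre_def by simp_all
    have preB: "y \<in> B (pre n)" for n
    proof (induction n)
      case 0 then show ?case using y pre0 by simp
    next
      case (Suc n)
      then show ?case unfolding preS nx_def using someI_ex[OF step[OF Suc]] by simp
    qed
    define x where "x n = nx (pre n)" for n
    have pre_map: "pre n = map x [0..<n]" for n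
      by (induction n) (simp_all add: pre0 preS x_def)
    show "y \<in> A []"
    proof (rule Aclos[of y x])
      fix n show "y \<in> Y closure_of A (map x [0..<n])"
        using preB[of n] B_cl[of "pre n"] unfolding pre_map[of n] by blast
    qed
  qed
  define Q where "Q = Y interior_of (B [])"
  have "A [] - Q \<subseteq> Mm [] \<union> (B [] - Y interior_of B [])"
    using A_BM[of "[]"] unfolding Q_def Mm_def by blast
  moreover have "meager_in Y (Mm [] \<union> (B [] - Y interior_of B []))"
    by (intro meager_Un Mm_meager nowhere_dense_meager boundary_nowhere_dense B_closed)
  ultimately have m1: "meager_in Y (A [] - Q)" by (rule meager_subset[rotated])
  have "Q - A [] \<subseteq> D" using main interior_of_subset[of Y "B []"] unfolding Q_def by blast
  then have m2: "meager_in Y (Q - A [])" using D_meager meager_subset by blast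
  show ?thesis using m1 m2 unfolding Q_def by (intro exI[of _ "Y interior_of B []"]) auto
qed


lemma zero_one:
  assumes Y: "completely_metrizable_space Y"
    and Qo: "openin Y Q" and m1: "meager_in Y (E - Q)" and m2: "meager_in Y (Q - E)"
    and Esub: "E \<subseteq> topspace Y"
    and hom: "\<And>\<sigma>. \<sigma> \<in> S \<Longrightarrow> homeomorphic_map Y Y \<sigma> \<and> \<sigma> ` E = E"
    and trans: "\<And>U V. openin Y U \<Longrightarrow> openin Y V \<Longrightarrow> U \<noteq> {} \<Longrightarrow> V \<noteq> {} \<Longrightarrow>
                  \<exists>\<sigma>\<in>S. \<sigma> ` U \<inter> V \<noteq> {}"
  shows "meager_in Y E \<or> comeager_in Y E"
proof (cases "Q = {}")
  case True
  then show ?thesis using m1 by simp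
next
  case Qne: False
  show ?thesis
  proof (cases "Y closure_of Q = topspace Y")
    case True
    have "Y interior_of (topspace Y - Q) = {}"
      using interior_of_complement[of Y Q] True by simp
    then have "nowhere_dense_in Y (topspace Y - Q)"
      by (intro closed_nowhere_dense) (use Qo in auto)
    then have "meager_in Y ((topspace Y - Q) \<union> (Q - E))"
      by (intro meager_Un nowhere_dense_meager m2)
    then have "meager_in Y (topspace Y - E)"
      by (rule meager_subset) blast
    then show ?thesis unfolding comeager_in_def using Esub by simp
  next
    case False
    define V where "V = topspace Y - Y closure_of Q"
    have Vo: "openin Y V" unfolding V_def by (intro openin_diff openin_topspace closedin_closure_of)
    have Vne: "V \<noteq> {}" using False closure_of_subset_topspace[of Y Q] unfolding V_def by blast
    obtain \<sigma> where s: "\<sigma> \<in> S" and sne: "\<sigma> ` Q \<inter> V \<noteq> {}" using trans[OF Qo Vo Qne Vne] by blast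
    have h: "homeomorphic_map Y Y \<sigma>" and sE: "\<sigma> ` E = E" using hom[OF s] by auto
    have Wo: "openin Y (\<sigma> ` Q \<inter> V)"
      using homeomorphic_imp_open_map[OF h] Qo Vo unfolding open_map_def by blast
    have "\<sigma> ` Q \<inter> V \<subseteq> \<sigma> ` (Q - E) \<union> (E - Q)"
    proof
      fix w assume w: "w \<in> \<sigma> ` Q \<inter> V"
      then obtain q where q: "q \<in> Q" "w = \<sigma> q" by blast
      show "w \<in> \<sigma> ` (Q - E) \<union> (E - Q)"
      proof (cases "w \<in> E")
        case True
        have "w \<notin> Q" using w closure_of_subset[OF openin_subset[OF Qo]] unfolding V_def by blast
        then show ?thesis using True by blast
      next
        case False
        then have "q \<notin> E" using sE q by blast
        then show ?thesis using q by blast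
      qed
    qed
    moreover have "meager_in Y (\<sigma> ` (Q - E) \<union> (E - Q))"
      by (intro meager_Un homeo_meager[OF h] m1 m2)
    ultimately have "meager_in Y (\<sigma> ` Q \<inter> V)" by (rule meager_subset[rotated])
    then show ?thesis using Baire_nonmeager[OF Y Wo sne] by blast
  qed
qed



lemma open_local:
  fixes S :: "('k \<Rightarrow> nat) set"
  assumes "\<And>f. f \<in> S \<Longrightarrow> \<exists>K. finite K \<and> (\<forall>g. (\<forall>k\<in>K. g k = f k) \<longrightarrow> g \<in> S)"
  shows "open S"
proof -
  obtain K where K: "\<And>f. f \<in> S \<Longrightarrow> finite (K f) \<and> (\<forall>g. (\<forall>k\<in>K f. g k = f k) \<longrightarrow> g \<in> S)"
    using assms by metis
  have op: "open {g. \<forall>i\<in>K f. g (id i) \<in> {f i}}" if "f \<in> S" for f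
    by (rule product_topology_basis') (use K[OF that] in \<open>auto intro: open_discrete\<close>)
  have "S = (\<Union>f\<in>S. {g. \<forall>i\<in>K f. g (id i) \<in> {f i}})"
  proof
    show "S \<subseteq> (\<Union>f\<in>S. {g. \<forall>i\<in>K f. g (id i) \<in> {f i}})" by auto
    show "(\<Union>f\<in>S. {g. \<forall>i\<in>K f. g (id i) \<in> {f i}}) \<subseteq> S" using K by auto
  qed
  also have "open \<dots>" using op by (intro open_UN) auto
  finally show ?thesis .
qed

definition cyl :: "('k \<times> nat) list \<Rightarrow> ('k \<Rightarrow> nat) set" where
  "cyl ps = {f. \<forall>(k,v)\<in>set ps. f k = v}"

lemma open_cyl: "open (cyl ps)"
proof (rule open_local)
  fix f assume f: "f \<in> cyl ps"
  show "\<exists>K. finite K \<and> (\<forall>g. (\<forall>k\<in>K. g k = f k) \<longrightarrow> g \<in> cyl ps)"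
  proof (intro exI[of _ "fst ` set ps"] conjI allI impI)
    show "finite (fst ` set ps)" by simp
    fix g assume H: "\<forall>k\<in>fst ` set ps. g k = f k"
    show "g \<in> cyl ps" unfolding cyl_def
    proof (clarsimp)
      fix a b assume ab: "(a, b) \<in> set ps"
      then have "g a = f a" using H by force
      moreover have "f a = b" using f ab unfolding cyl_def by auto
      ultimately show "g a = b" by simp
    qed
  qed
qed

lemma cyl_base:
  fixes U :: "('k \<Rightarrow> nat) set"
  assumes "open U" "f \<in> U"
  shows "\<exists>ps. f \<in> cyl ps \<and> cyl ps \<subseteq> U"
proof -
  have "openin (product_topology (\<lambda>_. euclidean) UNIV) U"
    using assms(1) by (simp add: euclidean_product_topology)
  from product_topology_open_contains_basis[OF this assms(2)]
  obtain X where X: "f \<in> (\<Pi>\<^sub>E i\<in>UNIV. X i)" "finite {i. X i \<noteq> UNIV}" "(\<Pi>\<^sub>E i\<in>UNIV. X i) \<subseteq> U"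
    by auto
  obtain xs where xs: "set xs = {i. X i \<noteq> UNIV}" using finite_list[OF X(2)] by blast
  define ps where "ps = map (\<lambda>k. (k, f k)) xs"
  have "f \<in> cyl ps" unfolding cyl_def ps_def by auto
  moreover have "cyl ps \<subseteq> U"
  proof
    fix g assume g: "g \<in> cyl ps"
    have "g \<in> (\<Pi>\<^sub>E i\<in>UNIV. X i)"
    proof (simp add: PiE_iff, intro allI)
      fix i show "g i \<in> X i"
      proof (cases "X i = UNIV")
        case False
        then have "(i, f i) \<in> set ps" unfolding ps_def using xs by auto
        then have "g i = f i" using g unfolding cyl_def by auto
        then show ?thesis using X(1) by (simp add: PiE_iff)
      qed simp
    qed
    then show "g \<in> U" using X(3) by blast
  qed
  ultimately show ?thesis by blast
qed

lemma group_tables_char: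
  "A \<in> group_tables \<longleftrightarrow>
    (\<forall>x y z. A (A (x,y), z) = A (x, A (y,z))) \<and>
    (\<forall>x. A (0,x) = x \<and> A (x,0) = x \<and> (\<exists>y. A (y,x) = 0 \<and> A (x,y) = 0))"
  unfolding group_tables_def table_group_def
  by (auto simp: group_def group_axioms_def monoid_def Units_def)

definition gcond :: "(nat \<times> nat \<Rightarrow> nat) \<Rightarrow> nat \<times> nat \<times> nat \<Rightarrow> bool" where
  "gcond A t = (case t of (x,y,z) \<Rightarrow> A (A (x,y), z) = A (x, A (y,z)) \<and>
     A (0,x) = x \<and> A (x,0) = x \<and> (\<exists>w. A (w,x) = 0 \<and> A (x,w) = 0))"

lemma group_tables_Inter: "group_tables = (\<Inter>t. {A. gcond A t})"
  unfolding set_eq_iff by (auto simp: group_tables_char gcond_def)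

lemma open_gcond: "open {A. gcond A t}"
proof (rule open_local)
  fix A assume A: "A \<in> {A. gcond A t}"
  obtain x y z where t: "t = (x,y,z)" by (cases t) auto
  obtain w where w: "A (w,x) = 0" "A (x,w) = 0" using A unfolding t gcond_def by auto
  show "\<exists>K. finite K \<and> (\<forall>g. (\<forall>k\<in>K. g k = A k) \<longrightarrow> g \<in> {A. gcond A t})"
    by (rule exI[of _ "{(x,y),(y,z),(A(x,y),z),(x,A(y,z)),(0,x),(x,0),(w,x),(x,w)}"])
       (use A w in \<open>auto simp: t gcond_def\<close>)
qed

lemma euclidean_nat_discrete: "(euclidean :: nat topology) = discrete_topology UNIV"
  by (rule topology_eq[THEN iffD2]) (simp add: open_discrete)

lemma cms_fun: "completely_metrizable_space (euclidean :: ('k::countable \<Rightarrow> nat) topology)"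
proof -
  have "completely_metrizable_space (product_topology (\<lambda>_::'k. (euclidean :: nat topology)) UNIV)"
    unfolding completely_metrizable_space_product_topology euclidean_nat_discrete
    by (simp add: completely_metrizable_space_discrete_topology)
  then show ?thesis by (simp add: euclidean_product_topology)
qed

lemma gdelta_local:
  fixes S :: "('k::countable \<Rightarrow> nat) set" and P :: "'t::countable \<Rightarrow> ('k \<Rightarrow> nat) set"
  assumes "\<And>t. open (P t)" "S = (\<Inter>t. P t)"
  shows "(countable intersection_of openin euclidean) S"
  unfolding intersection_of_def
  by (rule exI[of _ "range P"]) (use assms in auto)

abbreviation YG :: "(nat \<times> nat \<Rightarrow> nat) topology" where
  "YG \<equiv> top_of_set group_tables"

lemma cms_YG: "completely_metrizable_space YG"
  by (rule completely_metrizable_space_gdelta_in_alt[OF cms_fun])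
     (rule gdelta_local[OF open_gcond group_tables_Inter])

lemma topspace_YG: "topspace YG = group_tables" by simp

lemma YG_bopen: "openin YG (group_tables \<inter> cyl ps)"
  using open_cyl by blast

lemma YG_base:
  assumes "openin YG U" "y \<in> U"
  shows "\<exists>ps. y \<in> group_tables \<inter> cyl ps \<and> group_tables \<inter> cyl ps \<subseteq> U"
proof -
  obtain T where T: "open T" "U = group_tables \<inter> T" using assms(1) by (auto simp: openin_open)
  obtain ps where "y \<in> cyl ps" "cyl ps \<subseteq> T" using cyl_base[OF T(1)] T(2) assms(2) by blast
  then show ?thesis using T(2) assms(2) by blast
qed



definition act :: "(nat \<Rightarrow> nat) \<Rightarrow> (nat \<times> nat \<Rightarrow> nat) \<Rightarrow> (nat \<times> nat \<Rightarrow> nat)" where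
  "act \<sigma> A = (\<lambda>(x,y). \<sigma> (A (inv_into UNIV \<sigma> x, inv_into UNIV \<sigma> y)))"

definition Perm0 :: "(nat \<Rightarrow> nat) set" where
  "Perm0 = {\<sigma>. bij \<sigma> \<and> \<sigma> 0 = 0}"

lemma act_apply: "act \<sigma> A (x,y) = \<sigma> (A (inv_into UNIV \<sigma> x, inv_into UNIV \<sigma> y))"
  by (simp add: act_def)

lemma Perm0_inv:
  assumes "\<sigma> \<in> Perm0" shows "inv_into UNIV \<sigma> \<in> Perm0" "inv_into UNIV \<sigma> 0 = 0"
      "\<And>x. inv_into UNIV \<sigma> (\<sigma> x) = x" "\<And>x. \<sigma> (inv_into UNIV \<sigma> x) = x" "inv_into UNIV (inv_into UNIV \<sigma>) = \<sigma>"
proof -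
  have b: "bij \<sigma>" and z: "\<sigma> 0 = 0" using assms by (auto simp: Perm0_def)
  show i: "\<And>x. inv_into UNIV \<sigma> (\<sigma> x) = x" using b by (simp add: bij_is_inj)
  show "\<And>x. \<sigma> (inv_into UNIV \<sigma> x) = x" using b by (simp add: bij_is_surj surj_f_inv_f)
  show "inv_into UNIV \<sigma> 0 = 0" using i[of 0] z by simp
  then show "inv_into UNIV \<sigma> \<in> Perm0" using b by (simp add: Perm0_def bij_imp_bij_inv)
  show "inv_into UNIV (inv_into UNIV \<sigma>) = \<sigma>" using b by (simp add: inv_inv_eq)
qed

lemma act_group:
  assumes s: "\<sigma> \<in> Perm0" and A: "A \<in> group_tables"
  shows "act \<sigma> A \<in> group_tables"
proof -
  note i = Perm0_inv[OF s]
  have z: "\<sigma> 0 = 0" using s by (simp add: Perm0_def)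
  have a: "\<forall>x y z. A (A (x,y), z) = A (x, A (y,z))"
   and e: "\<And>x. A (0,x) = x" "\<And>x. A (x,0) = x"
   and iv: "\<And>x. \<exists>y. A (y,x) = 0 \<and> A (x,y) = 0"
    using A unfolding group_tables_char by auto
  show ?thesis unfolding group_tables_char
  proof (intro conjI allI)
    fix x y w show "act \<sigma> A (act \<sigma> A (x, y), w) = act \<sigma> A (x, act \<sigma> A (y, w))"
      by (simp add: act_apply i a)
  next
    fix x show "act \<sigma> A (0, x) = x" by (simp add: act_apply i e)
    show "act \<sigma> A (x, 0) = x" by (simp add: act_apply i e)
    obtain y where y: "A (y, inv_into UNIV \<sigma> x) = 0" "A (inv_into UNIV \<sigma> x, y) = 0" using iv by blast
    show "\<exists>y. act \<sigma> A (y, x) = 0 \<and> act \<sigma> A (x, y) = 0"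
      by (rule exI[of _ "\<sigma> y"]) (simp add: act_apply i y z)
  qed
qed

lemma act_inv: assumes "\<sigma> \<in> Perm0" shows "act (inv_into UNIV \<sigma>) (act \<sigma> A) = A"
  using Perm0_inv[OF assms] by (simp add: act_def)

lemma act_inv2: assumes "\<sigma> \<in> Perm0" shows "act \<sigma> (act (inv_into UNIV \<sigma>) A) = A"
  using Perm0_inv[OF assms] by (simp add: act_def)

lemma act_cont: "continuous_on S (act \<sigma>)"
proof -
  have "continuous_on S (\<lambda>A. act \<sigma> A p)" for p
  proof -
    obtain x y where p: "p = (x,y)" by (cases p)
    have "continuous_on S (\<sigma> \<circ> (\<lambda>A. A (inv_into UNIV \<sigma> x, inv_into UNIV \<sigma> y)))"
    proof (rule continuous_on_compose)
      show "continuous_on S (\<lambda>A. A (inv_into UNIV \<sigma> x, inv_into UNIV \<sigma> y))"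
        by (rule continuous_on_product_then_coordinatewise[OF continuous_on_id])
      show "continuous_on ((\<lambda>A. A (inv_into UNIV \<sigma> x, inv_into UNIV \<sigma> y)) ` S) \<sigma>"
        by (rule Topological_Spaces.continuous_on_discrete)
    qed
    then show ?thesis by (simp add: p act_def o_def)
  qed
  then show ?thesis by (intro continuous_on_coordinatewise_then_product)
qed

lemma act_homeo:
  assumes s: "\<sigma> \<in> Perm0" shows "homeomorphic_map YG YG (act \<sigma>)"
  unfolding homeomorphic_map_maps homeomorphic_maps_def
proof (intro exI[of _ "act (inv_into UNIV \<sigma>)"] conjI ballI)
  show "continuous_map YG YG (act \<sigma>)"
    unfolding continuous_map_subtopology_eu using act_group[OF s] act_cont by blast
  show "continuous_map YG YG (act (inv_into UNIV \<sigma>))"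
    unfolding continuous_map_subtopology_eu using act_group[OF Perm0_inv(1)[OF s]] act_cont by blast
qed (simp_all add: act_inv act_inv2 s)

lemma act_embeddable:
  assumes s: "\<sigma> \<in> Perm0" and "embeddable H (table_group A)"
  shows "embeddable H (table_group (act \<sigma> A))"
proof -
  obtain f where f: "f \<in> hom H (table_group A)" "inj_on f (carrier H)"
    using assms(2) unfolding embeddable_def by blast
  note i = Perm0_inv[OF s]
  have bs: "inj \<sigma>" using s by (simp add: Perm0_def bij_is_inj)
  have "\<sigma> \<circ> f \<in> hom H (table_group (act \<sigma> A))"
    using f(1) by (simp add: hom_def table_group_def act_apply i)
  moreover have "inj_on (\<sigma> \<circ> f) (carrier H)"
    using f(2) bs by (simp add: comp_inj_on inj_on_subset)
  ultimately show ?thesis unfolding embeddable_def by blast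
qed

lemma act_E:
  assumes s: "\<sigma> \<in> Perm0"
  shows "act \<sigma> ` {G \<in> group_tables. embeddable H (table_group G)} = {G \<in> group_tables. embeddable H (table_group G)}"
    (is "_ ` ?E = ?E")
proof
  show "act \<sigma> ` ?E \<subseteq> ?E" using act_group[OF s] act_embeddable[OF s] by blast
  show "?E \<subseteq> act \<sigma> ` ?E"
  proof
    fix G assume G: "G \<in> ?E"
    have "act (inv_into UNIV \<sigma>) G \<in> ?E"
      using G act_group[OF Perm0_inv(1)[OF s]] act_embeddable[OF Perm0_inv(1)[OF s]] by blast
    moreover have "G = act \<sigma> (act (inv_into UNIV \<sigma>) G)" using act_inv2[OF s] by simp
    ultimately show "G \<in> act \<sigma> ` ?E" by blast
  qed
qed

definition tr :: "nat \<Rightarrow> nat \<Rightarrow> nat \<Rightarrow> nat" where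
  "tr u v z = (if z = u then v else if z = v then u else z)"

lemma bij_tr: "bij (tr u v)"
proof -
  have "tr u v \<circ> tr u v = id" by (auto simp: tr_def fun_eq_iff)
  then show ?thesis using o_bij by blast
qed

lemma extend_perm:
  fixes F :: "nat set" and \<iota> :: "nat \<Rightarrow> nat"
  assumes "finite F" "inj_on \<iota> F"
  shows "\<exists>\<sigma>. bij \<sigma> \<and> (\<forall>a\<in>F. \<sigma> (\<iota> a) = a)"
  using assms
proof (induction F rule: finite_induct)
  case empty
  show ?case using bij_id by blast
next
  case (insert a F)
  then obtain \<sigma> where s: "bij \<sigma>" "\<forall>c\<in>F. \<sigma> (\<iota> c) = c" by auto
  define \<sigma>' where "\<sigma>' = tr (\<sigma> (\<iota> a)) a \<circ> \<sigma>"
  have "bij \<sigma>'" unfolding \<sigma>'_def by (rule bij_comp[OF s(1) bij_tr])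
  moreover have "\<sigma>' (\<iota> a) = a" unfolding \<sigma>'_def by (simp add: tr_def)
  moreover have "\<sigma>' (\<iota> c) = c" if c: "c \<in> F" for c
  proof -
    have "c \<noteq> a" using c insert(2) by blast
    moreover have "\<sigma> (\<iota> a) \<noteq> c"
    proof
      assume "\<sigma> (\<iota> a) = c"
      then have "\<sigma> (\<iota> a) = \<sigma> (\<iota> c)" using s(2) c by simp
      then have "\<iota> a = \<iota> c" using s(1) by (simp add: bij_is_inj inj_eq)
      then show False using insert(4) c \<open>c \<noteq> a\<close> by (auto simp: inj_on_def)
    qed
    ultimately show ?thesis unfolding \<sigma>'_def using s(2) c by (simp add: tr_def)
  qed
  ultimately show ?case by auto
qed



lemma pe00: "prod_encode (0,0) = 0" by (simp add: prod_encode_def)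
lemma pd0: "prod_decode 0 = (0,0)" using prod_encode_inverse[of "(0,0)"] by (simp add: pe00)

definition ptab :: "(nat \<times> nat \<Rightarrow> nat) \<Rightarrow> (nat \<times> nat \<Rightarrow> nat) \<Rightarrow> (nat \<times> nat \<Rightarrow> nat)" where
  "ptab G1 G2 = (\<lambda>(a,b). prod_encode (G1 (fst (prod_decode a), fst (prod_decode b)),
                                         G2 (snd (prod_decode a), snd (prod_decode b))))"

lemma ptab_apply: "ptab G1 G2 (a,b) = prod_encode (G1 (fst (prod_decode a), fst (prod_decode b)),
                                         G2 (snd (prod_decode a), snd (prod_decode b)))"
  by (simp add: ptab_def)

lemma pe_pd: "prod_encode (fst (prod_decode x), snd (prod_decode x)) = x"
  by simp

lemma ptab_group:
  assumes G1: "G1 \<in> group_tables" and G2: "G2 \<in> group_tables"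
  shows "ptab G1 G2 \<in> group_tables"
proof -
  have a1: "\<And>x y z. G1 (G1 (x,y), z) = G1 (x, G1 (y,z))"
   and e1: "\<And>x. G1 (0,x) = x" "\<And>x. G1 (x,0) = x"
   and i1: "\<And>x. \<exists>y. G1 (y,x) = 0 \<and> G1 (x,y) = 0"
    using G1 unfolding group_tables_char by auto
  have a2: "\<And>x y z. G2 (G2 (x,y), z) = G2 (x, G2 (y,z))"
   and e2: "\<And>x. G2 (0,x) = x" "\<And>x. G2 (x,0) = x"
   and i2: "\<And>x. \<exists>y. G2 (y,x) = 0 \<and> G2 (x,y) = 0"
    using G2 unfolding group_tables_char by auto
  show ?thesis unfolding group_tables_char
  proof (intro conjI allI)
    fix x y z show "ptab G1 G2 (ptab G1 G2 (x, y), z) = ptab G1 G2 (x, ptab G1 G2 (y, z))"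
      by (simp add: ptab_apply a1 a2)
  next
    fix x
    show "ptab G1 G2 (0, x) = x" by (simp add: ptab_apply pd0 e1 e2)
    show "ptab G1 G2 (x, 0) = x" by (simp add: ptab_apply pd0 e1 e2)
    obtain y1 where y1: "G1 (y1, fst (prod_decode x)) = 0" "G1 (fst (prod_decode x), y1) = 0" using i1 by blast
    obtain y2 where y2: "G2 (y2, snd (prod_decode x)) = 0" "G2 (snd (prod_decode x), y2) = 0" using i2 by blast
    show "\<exists>y. ptab G1 G2 (y, x) = 0 \<and> ptab G1 G2 (x, y) = 0"
      by (rule exI[of _ "prod_encode (y1, y2)"]) (simp add: ptab_apply y1 y2 pe00)
  qed
qed

lemma embed_cyl:
  assumes T: "T \<in> group_tables" and G: "G \<in> cyl p" and inj: "inj \<iota>" and z: "\<iota> 0 = 0"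
    and hom: "\<And>a b. T (\<iota> a, \<iota> b) = \<iota> (G (a,b))"
  shows "\<exists>\<sigma>\<in>Perm0. act \<sigma> T \<in> cyl p"
proof -
  define F where "F = insert 0 (fst ` fst ` set p \<union> snd ` fst ` set p \<union> snd ` set p)"
  have "finite F" unfolding F_def by simp
  from extend_perm[OF this inj_on_subset[OF inj subset_UNIV]]
  obtain \<sigma> where s: "bij \<sigma>" "\<And>a. a \<in> F \<Longrightarrow> \<sigma> (\<iota> a) = a" by blast
  have s0: "\<sigma> 0 = 0" using s(2)[of 0] z unfolding F_def by simp
  have sP: "\<sigma> \<in> Perm0" using s(1) s0 by (simp add: Perm0_def)
  have iv: "inv_into UNIV \<sigma> a = \<iota> a" if "a \<in> F" for a
    using inv_f_eq[OF bij_is_inj[OF s(1)] s(2)[OF that]] .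
  have "act \<sigma> T \<in> cyl p" unfolding cyl_def
  proof (clarsimp)
    fix a b v assume abv: "((a, b), v) \<in> set p"
    have aF: "a \<in> F" and bF: "b \<in> F" and vF: "v \<in> F" unfolding F_def using abv by force+
    have Gab: "G (a,b) = v" using G abv unfolding cyl_def by auto
    show "act \<sigma> T (a, b) = v"
      by (simp add: act_apply iv aF bF hom Gab s(2) vF)
  qed
  then show ?thesis using sP by blast
qed

lemma transitive:
  assumes U: "openin YG U" "U \<noteq> {}" and V: "openin YG V" "V \<noteq> {}"
  shows "\<exists>\<sigma>\<in>Perm0. act \<sigma> ` U \<inter> V \<noteq> {}"
proof -
  obtain u where "u \<in> U" using U by blast
  then obtain p where p: "u \<in> group_tables \<inter> cyl p" "group_tables \<inter> cyl p \<subseteq> U"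
    using YG_base[OF U(1)] by blast
  obtain w where "w \<in> V" using V by blast
  then obtain q where q: "w \<in> group_tables \<inter> cyl q" "group_tables \<inter> cyl q \<subseteq> V"
    using YG_base[OF V(1)] by blast
  define T where "T = ptab u w"
  have T: "T \<in> group_tables" unfolding T_def using p(1) q(1) by (intro ptab_group) auto
  have ug: "u \<in> group_tables" and wg: "w \<in> group_tables" using p(1) q(1) by auto
  have u00: "u (0,0) = 0" using ug[unfolded group_tables_char] by blast
  have w00: "w (0,0) = 0" using wg[unfolded group_tables_char] by blast
  have "\<exists>\<sigma>\<in>Perm0. act \<sigma> T \<in> cyl p"
  proof (rule embed_cyl[OF T, of u p "\<lambda>a. prod_encode (a,0)"])
    show "inj (\<lambda>a. prod_encode (a, 0))" by (auto simp: inj_def dest: inj_onD[OF inj_prod_encode])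
    show "\<And>a b. T (prod_encode (a, 0), prod_encode (b, 0)) = prod_encode (u (a, b), 0)"
      by (simp add: T_def ptab_apply w00)
  qed (use p(1) pe00 in auto)
  then obtain \<sigma>1 where s1: "\<sigma>1 \<in> Perm0" "act \<sigma>1 T \<in> cyl p" by blast
  have "\<exists>\<sigma>\<in>Perm0. act \<sigma> T \<in> cyl q"
  proof (rule embed_cyl[OF T, of w q "\<lambda>a. prod_encode (0,a)"])
    show "inj (\<lambda>a. prod_encode (0, a))" by (auto simp: inj_def dest: inj_onD[OF inj_prod_encode])
    show "\<And>a b. T (prod_encode (0, a), prod_encode (0, b)) = prod_encode (0, w (a, b))"
      by (simp add: T_def ptab_apply u00)
  qed (use q(1) pe00 in auto)
  then obtain \<sigma>2 where s2: "\<sigma>2 \<in> Perm0" "act \<sigma>2 T \<in> cyl q" by blast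
  define \<sigma> where "\<sigma> = \<sigma>2 \<circ> inv_into UNIV \<sigma>1"
  have b1: "bij \<sigma>1" and b2: "bij \<sigma>2" using s1(1) s2(1) by (auto simp: Perm0_def)
  note i1 = Perm0_inv[OF s1(1)] and i2 = Perm0_inv[OF s2(1)]
  have sP: "\<sigma> \<in> Perm0" unfolding \<sigma>_def Perm0_def
    using bij_comp[OF bij_imp_bij_inv[OF b1] b2] i1(2) s2(1) by (simp add: Perm0_def)
  have invs: "inv_into UNIV \<sigma> = \<sigma>1 \<circ> inv_into UNIV \<sigma>2"
    unfolding \<sigma>_def using o_inv_distrib[OF b2 bij_imp_bij_inv[OF b1]] i1(5) by simp
  have eq: "act \<sigma> (act \<sigma>1 T) = act \<sigma>2 T"
    unfolding act_def invs by (simp add: \<sigma>_def i1 fun_eq_iff)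
  have G: "act \<sigma>1 T \<in> U" using p(2) s1(2) act_group[OF s1(1) T] by blast
  have "act \<sigma>2 T \<in> V" using q(2) s2(2) act_group[OF s2(1) T] by blast
  moreover have "act \<sigma> (act \<sigma>1 T) \<in> act \<sigma> ` U" using G by (rule imageI)
  ultimately have "act \<sigma> (act \<sigma>1 T) \<in> act \<sigma> ` U \<inter> V" using eq by simp
  then show ?thesis using sP by blast
qed



lemma push_homeo:
  fixes P :: "'a topology" and j :: "'a \<Rightarrow> 'b"
  assumes inj: "inj_on j (topspace P)"
  defines "X \<equiv> topology (\<lambda>S. S \<subseteq> j ` topspace P \<and> openin P (topspace P \<inter> j -` S))"
  shows "homeomorphic_map P X j" "topspace X = j ` topspace P"
proof -
  define L where "L = (\<lambda>S. S \<subseteq> j ` topspace P \<and> openin P (topspace P \<inter> j -` S))"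
  have isL: "istopology L" unfolding istopology_def
  proof (intro conjI allI impI ballI)
    fix S T assume "L S" "L T"
    then have o: "openin P ((topspace P \<inter> j -` S) \<inter> (topspace P \<inter> j -` T))"
      and s: "S \<subseteq> j ` topspace P" unfolding L_def by (simp_all add: openin_Int)
    have "topspace P \<inter> j -` (S \<inter> T) = (topspace P \<inter> j -` S) \<inter> (topspace P \<inter> j -` T)" by blast
    then show "L (S \<inter> T)" unfolding L_def using o s by auto
  next
    fix K assume K: "\<forall>K'\<in>K. L K'"
    have "topspace P \<inter> j -` \<Union>K = (\<Union>K'\<in>K. topspace P \<inter> j -` K')" by blast
    moreover have "openin P (\<Union>K'\<in>K. topspace P \<inter> j -` K')" using K unfolding L_def by blast
    ultimately show "L (\<Union>K)" using K unfolding L_def by auto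
  qed
  have oX: "openin X S \<longleftrightarrow> L S" for S unfolding X_def L_def[symmetric] using isL by simp
  have LjP: "L (j ` topspace P)"
  proof -
    have "topspace P \<inter> j -` (j ` topspace P) = topspace P" by blast
    then show ?thesis unfolding L_def by simp
  qed
  show tX: "topspace X = j ` topspace P"
  proof
    show "topspace X \<subseteq> j ` topspace P" unfolding topspace_def oX L_def by blast
    show "j ` topspace P \<subseteq> topspace X" using LjP oX openin_subset by blast
  qed
  define g where "g = inv_into (topspace P) j"
  have gj: "g (j x) = x" if "x \<in> topspace P" for x using inj that unfolding g_def by simp
  have jg: "j (g y) = y" if "y \<in> j ` topspace P" for y using that unfolding g_def by (simp add: f_inv_into_f)
  have gP: "g y \<in> topspace P" if "y \<in> j ` topspace P" for y using that unfolding g_def by (simp add: inv_into_into)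
  have "homeomorphic_maps P X j g" unfolding homeomorphic_maps_def continuous_map_def
  proof (intro conjI allI impI ballI)
    show "j \<in> topspace P \<rightarrow> topspace X" using tX by blast
    show "g \<in> topspace X \<rightarrow> topspace P" using tX gP by blast
    fix U assume "openin X U"
    then have "L U" using oX by blast
    moreover have "{x \<in> topspace P. j x \<in> U} = topspace P \<inter> j -` U" by blast
    ultimately show "openin P {x \<in> topspace P. j x \<in> U}" unfolding L_def by simp
  next
    fix U assume U: "openin P U"
    have "{x \<in> topspace X. g x \<in> U} = j ` U"
    proof
      show "{x \<in> topspace X. g x \<in> U} \<subseteq> j ` U"
      proof
        fix x assume x: "x \<in> {x \<in> topspace X. g x \<in> U}"
        then have "x = j (g x)" using tX jg by simp
        then show "x \<in> j ` U" using x by (metis (mono_tags, lifting) image_eqI mem_Collect_eq)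
      qed
      show "j ` U \<subseteq> {x \<in> topspace X. g x \<in> U}"
      proof
        fix y assume "y \<in> j ` U"
        then obtain u where u: "u \<in> U" "y = j u" by blast
        then have "u \<in> topspace P" using openin_subset[OF U] by blast
        then show "y \<in> {x \<in> topspace X. g x \<in> U}" using u tX gj by simp
      qed
    qed
    moreover have "L (j ` U)"
    proof -
      have "topspace P \<inter> j -` (j ` U) = U"
        using inj openin_subset[OF U] by (auto simp: inj_on_def)
      then show ?thesis unfolding L_def using U openin_subset[OF U] by auto
    qed
    ultimately show "openin X {x \<in> topspace X. g x \<in> U}" using oX by simp
  next
    fix x assume "x \<in> topspace P" then show "g (j x) = x" by (rule gj)
  next
    fix y assume "y \<in> topspace X" then show "j (g y) = y" using tX jg by blast
  qed
  then show "homeomorphic_map P X j" using homeomorphic_map_maps by blast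
qed

lemma analytic_from:
  fixes P :: "'a topology" and j :: "'a \<Rightarrow> (nat \<Rightarrow> real)"
  assumes P: "Polish_space P" and g: "continuous_map P Y g" "g ` topspace P = S"
    and inj: "inj_on j (topspace P)"
  shows "analytic_in Y S"
proof -
  define X where "X = topology (\<lambda>S. S \<subseteq> j ` topspace P \<and> openin P (topspace P \<inter> j -` S))"
  have h: "homeomorphic_map P X j" and tX: "topspace X = j ` topspace P"
    using push_homeo[OF inj] unfolding X_def by auto
  obtain g' where g': "homeomorphic_maps P X j g'" using h homeomorphic_map_maps by blast
  have cg': "continuous_map X P g'" using g' unfolding homeomorphic_maps_def by blast
  have g'j: "g' (j x) = x" if "x \<in> topspace P" for x using g' that unfolding homeomorphic_maps_def by blast
  have hs: "P homeomorphic_space X" using h homeomorphic_map_imp_homeomorphic_space by blast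
  have PX: "Polish_space X" using P hs homeomorphic_completely_metrizable_space homeomorphic_separable_space
    unfolding Polish_space_def by blast
  show ?thesis unfolding analytic_in_def
  proof (intro exI conjI)
    show "Polish_space X" by (rule PX)
    show "topspace X \<in> borel_sets_of X" unfolding borel_sets_of_def by (rule sigma_sets_top)
    show "continuous_map (subtopology X (topspace X)) Y (g \<circ> g')"
      using continuous_map_compose[OF cg' g(1)] by simp
    show "(g \<circ> g') ` topspace X = S" using g(2) g'j unfolding tX by (force simp: image_comp)
  qed
qed



definition Cw :: "('h, 'c) monoid_scheme \<Rightarrow> (nat \<Rightarrow> 'h) \<Rightarrow> (nat \<times> nat \<Rightarrow> nat) \<Rightarrow> (nat \<Rightarrow> nat) \<Rightarrow> bool" where
  "Cw H e G x \<longleftrightarrow> (\<forall>i j. x i = x j \<longleftrightarrow> e i = e j) \<and>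
      (\<forall>i j k. e k = e i \<otimes>\<^bsub>H\<^esub> e j \<longrightarrow> x k = G (x i, x j))"

lemma E_char:
  fixes H :: "('h, 'c) monoid_scheme" and e :: "nat \<Rightarrow> 'h"
  assumes H: "group H" and e: "range e = carrier H"
  shows "embeddable H (table_group G) \<longleftrightarrow> (\<exists>x. Cw H e G x)"
proof
  assume "embeddable H (table_group G)"
  then obtain f where f: "f \<in> hom H (table_group G)" "inj_on f (carrier H)"
    unfolding embeddable_def by blast
  have ec: "e i \<in> carrier H" for i using e by blast
  have fm: "f (a \<otimes>\<^bsub>H\<^esub> b) = G (f a, f b)" if "a \<in> carrier H" "b \<in> carrier H" for a b
    using f(1) that unfolding hom_def table_group_def by simp
  have "Cw H e G (f \<circ> e)" unfolding Cw_def
  proof (intro conjI allI impI)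
    fix i j show "(f \<circ> e) i = (f \<circ> e) j \<longleftrightarrow> e i = e j"
      using f(2) ec by (auto simp: inj_on_def)
  next
    fix i j k assume "e k = e i \<otimes>\<^bsub>H\<^esub> e j"
    then show "(f \<circ> e) k = G ((f \<circ> e) i, (f \<circ> e) j)" using fm ec by simp
  qed
  then show "\<exists>x. Cw H e G x" by blast
next
  assume "\<exists>x. Cw H e G x"
  then obtain x where x: "Cw H e G x" by blast
  define idx where "idx h = (SOME i. e i = h)" for h
  have eidx: "e (idx h) = h" if "h \<in> carrier H" for h
  proof -
    have "h \<in> range e" using that e by simp
    then have "\<exists>i. e i = h" by (metis rangeE)
    then show ?thesis unfolding idx_def by (rule someI_ex)
  qed
  have "x \<circ> idx \<in> hom H (table_group G)"
    unfolding hom_def table_group_def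
  proof (clarsimp)
    fix a b assume a: "a \<in> carrier H" and b: "b \<in> carrier H"
    have ab: "a \<otimes>\<^bsub>H\<^esub> b \<in> carrier H" using H a b by (simp add: group.is_monoid monoid.m_closed)
    have "e (idx (a \<otimes>\<^bsub>H\<^esub> b)) = e (idx a) \<otimes>\<^bsub>H\<^esub> e (idx b)" using eidx a b ab by simp
    then show "x (idx (a \<otimes>\<^bsub>H\<^esub> b)) = G (x (idx a), x (idx b))" using x unfolding Cw_def by blast
  qed
  moreover have "inj_on (x \<circ> idx) (carrier H)"
  proof (rule inj_onI)
    fix a b assume a: "a \<in> carrier H" and b: "b \<in> carrier H" and "(x \<circ> idx) a = (x \<circ> idx) b"
    then have "e (idx a) = e (idx b)" using x unfolding Cw_def by simp
    then show "a = b" using eidx a b by simp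
  qed
  ultimately show "embeddable H (table_group G)" unfolding embeddable_def by blast
qed

definition As :: "('h, 'c) monoid_scheme \<Rightarrow> (nat \<Rightarrow> 'h) \<Rightarrow> nat list \<Rightarrow> (nat \<times> nat \<Rightarrow> nat) set" where
  "As H e s = {G \<in> group_tables. \<exists>x. (\<forall>i<length s. x i = s ! i) \<and> Cw H e G x}"

lemma As_split: "As H e s = (\<Union>i. As H e (s @ [i]))"
proof
  show "As H e s \<subseteq> (\<Union>i. As H e (s @ [i]))"
  proof
    fix G assume "G \<in> As H e s"
    then obtain x where G: "G \<in> group_tables" "\<forall>i<length s. x i = s ! i" "Cw H e G x"
      unfolding As_def by blast
    have "\<forall>i<length (s @ [x (length s)]). x i = (s @ [x (length s)]) ! i"
    proof (intro allI impI)
      fix i assume "i < length (s @ [x (length s)])"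
      then have "i < length s \<or> i = length s" by auto
      then show "x i = (s @ [x (length s)]) ! i" using G(2) by (auto simp: nth_append)
    qed
    then have "G \<in> As H e (s @ [x (length s)])" unfolding As_def using G by blast
    then show "G \<in> (\<Union>i. As H e (s @ [i]))" by blast
  qed
  show "(\<Union>i. As H e (s @ [i])) \<subseteq> As H e s"
  proof
    fix G assume "G \<in> (\<Union>i. As H e (s @ [i]))"
    then obtain i x where G: "G \<in> group_tables" "\<forall>k<length (s @ [i]). x k = (s @ [i]) ! k" "Cw H e G x"
      unfolding As_def by blast
    have "\<forall>k<length s. x k = s ! k"
    proof (intro allI impI)
      fix k assume k: "k < length s"
      then show "x k = s ! k" using G(2) by (auto simp: nth_append)
    qed
    then show "G \<in> As H e s" unfolding As_def using G by blast
  qed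
qed

lemma As_clos:
  assumes cl: "\<And>n. y \<in> YG closure_of As H e (map x [0..<n])"
  shows "y \<in> As H e []"
proof -
  have "y \<in> topspace YG" using cl[of 0] unfolding in_closure_of by (rule conjunct1)
  then have yG: "y \<in> group_tables" by simp
  have get: "\<exists>z x'. z \<in> T \<and> z \<in> group_tables \<and> (\<forall>i<n. x' i = x i) \<and> Cw H e z x'"
    if T: "openin YG T" "y \<in> T" for T n
  proof -
    have "\<forall>T. y \<in> T \<and> openin YG T \<longrightarrow> (\<exists>z. z \<in> As H e (map x [0..<n]) \<and> z \<in> T)"
      using cl[of n] unfolding in_closure_of by (rule conjunct2)
    then have "\<exists>z. z \<in> As H e (map x [0..<n]) \<and> z \<in> T" using T by simp
    then obtain z where z: "z \<in> As H e (map x [0..<n])" "z \<in> T" by (elim exE conjE)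
    have "z \<in> group_tables \<and> (\<exists>x'. (\<forall>i<length (map x [0..<n]). x' i = (map x [0..<n]) ! i) \<and> Cw H e z x')"
      using z(1) unfolding As_def by (rule CollectD)
    then obtain x' where x': "z \<in> group_tables" "\<forall>i<length (map x [0..<n]). x' i = (map x [0..<n]) ! i" "Cw H e z x'"
      by (elim exE conjE)
    have "\<forall>i<n. x' i = x i" using x'(2) by (simp del: upt_Suc)
    then show ?thesis using z(2) x'(1,3) by blast
  qed
  have "Cw H e y x" unfolding Cw_def
  proof (intro conjI allI impI)
    fix i j
    have "openin YG (topspace YG)" by simp
    from get[OF this, of "Suc (max i j)"] yG
    obtain z x' where zx: "\<forall>k<Suc (max i j). x' k = x k" "Cw H e z x'" by auto
    have "x' i = x i" "x' j = x j" using zx(1) by auto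
    moreover have "x' i = x' j \<longleftrightarrow> e i = e j" using zx(2) unfolding Cw_def by blast
    ultimately show "x i = x j \<longleftrightarrow> e i = e j" by simp
  next
    fix i j k assume ek: "e k = e i \<otimes>\<^bsub>H\<^esub> e j"
    define T where "T = group_tables \<inter> cyl [((x i, x j), y (x i, x j))]"
    have T1: "openin YG T" unfolding T_def by (rule YG_bopen)
    have T2: "y \<in> T" unfolding T_def using yG by (simp add: cyl_def)
    from get[OF T1 T2, of "Suc (max i (max j k))"]
    obtain z x' where zx: "z \<in> T" "\<forall>m<Suc (max i (max j k)). x' m = x m" "Cw H e z x'"
      by blast
    have xi: "x' i = x i" and xj: "x' j = x j" and xk: "x' k = x k" using zx(2) by auto
    have "x' k = z (x' i, x' j)" using zx(3) ek unfolding Cw_def by blast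
    moreover have "z (x i, x j) = y (x i, x j)" using zx(1) unfolding T_def cyl_def by simp
    ultimately show "x k = y (x i, x j)" using xi xj xk by simp
  qed
  then show ?thesis unfolding As_def using yG by auto
qed

lemma As_nil:
  fixes H :: "('h, 'c) monoid_scheme" and e :: "nat \<Rightarrow> 'h"
  assumes "group H" "range e = carrier H"
  shows "As H e [] = {G \<in> group_tables. embeddable H (table_group G)}"
  unfolding As_def using E_char[OF assms] by auto

lemma baire_part:
  fixes H :: "('h, 'c) monoid_scheme" and e :: "nat \<Rightarrow> 'h"
  assumes H: "group H" and e: "range e = carrier H"
  shows "meager_in YG {G \<in> group_tables. embeddable H (table_group G)} \<or>
         comeager_in YG {G \<in> group_tables. embeddable H (table_group G)}"
proof -
  let ?E = "{G \<in> group_tables. embeddable H (table_group G)}"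
  have "\<exists>Q. openin YG Q \<and> meager_in YG (As H e [] - Q) \<and> meager_in YG (Q - As H e [])"
  proof (rule souslin_BP[where b = "\<lambda>ps :: ((nat \<times> nat) \<times> nat) list. group_tables \<inter> cyl ps"])
    show "\<And>i. openin YG (group_tables \<inter> cyl i)" by (rule YG_bopen)
    show "\<And>U y. openin YG U \<Longrightarrow> y \<in> U \<Longrightarrow> \<exists>i. y \<in> group_tables \<inter> cyl i \<and> group_tables \<inter> cyl i \<subseteq> U"
      by (rule YG_base)
    show "\<And>s. As H e s \<subseteq> topspace YG" unfolding As_def by auto
    show "\<And>s. As H e s = (\<Union>i. As H e (s @ [i]))" by (rule As_split)
    show "\<And>x y. (\<And>n. y \<in> YG closure_of As H e (map x [0..<n])) \<Longrightarrow> y \<in> As H e []"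
      by (rule As_clos)
  qed
  then obtain Q where Q: "openin YG Q" "meager_in YG (?E - Q)" "meager_in YG (Q - ?E)"
    unfolding As_nil[OF H e] by blast
  show ?thesis
  proof (rule zero_one[OF cms_YG Q, where S = "act ` Perm0"])
    show "?E \<subseteq> topspace YG" by auto
    fix \<tau> assume "\<tau> \<in> act ` Perm0"
    then obtain \<sigma> where s: "\<sigma> \<in> Perm0" "\<tau> = act \<sigma>" by blast
    show "homeomorphic_map YG YG \<tau> \<and> \<tau> ` ?E = ?E"
      using act_homeo[OF s(1)] act_E[OF s(1)] s(2) by simp
  next
    fix U V assume "openin YG U" "openin YG V" "U \<noteq> {}" "V \<noteq> {}"
    then obtain \<sigma> where "\<sigma> \<in> Perm0" "act \<sigma> ` U \<inter> V \<noteq> {}" using transitive by blast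
    then show "\<exists>\<tau>\<in>act ` Perm0. \<tau> ` U \<inter> V \<noteq> {}" by blast
  qed
qed



definition dec :: "(nat \<Rightarrow> nat) \<Rightarrow> (nat \<times> nat \<Rightarrow> nat)" where
  "dec w = (\<lambda>p. w (2 * prod_encode p))"

definition wit :: "(nat \<Rightarrow> nat) \<Rightarrow> (nat \<Rightarrow> nat)" where
  "wit w = (\<lambda>m. w (2 * m + 1))"

lemma cont_dec: "continuous_on S dec"
  unfolding dec_def
  by (intro continuous_on_coordinatewise_then_product continuous_on_product_then_coordinatewise[OF continuous_on_id])

lemma second_countable_fun: "second_countable (euclidean :: ('k::countable \<Rightarrow> nat) topology)"
  unfolding second_countable_def
proof (intro exI[of _ "range cyl"] conjI ballI allI impI)
  show "countable (range (cyl :: ('k \<times> nat) list \<Rightarrow> _))" by simp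
  fix V :: "('k \<Rightarrow> nat) set" assume "V \<in> range cyl"
  then show "openin euclidean V" using open_cyl by auto
next
  fix U :: "('k \<Rightarrow> nat) set" and x assume "openin euclidean U \<and> x \<in> U"
  then obtain ps where "x \<in> cyl ps" "cyl ps \<subseteq> U" using cyl_base[of U x] by auto
  then show "\<exists>V\<in>range cyl. x \<in> V \<and> V \<subseteq> U" by blast
qed

definition Pt :: "('h, 'c) monoid_scheme \<Rightarrow> (nat \<Rightarrow> 'h) \<Rightarrow> nat \<times> nat \<times> nat \<Rightarrow> (nat \<Rightarrow> nat) set" where
  "Pt H e t = (case t of (x,y,z) \<Rightarrow>
     dec -` {A. gcond A (x,y,z)} \<inter> {w. wit w x = wit w y \<longleftrightarrow> e x = e y} \<inter>
     {w. e z = e x \<otimes>\<^bsub>H\<^esub> e y \<longrightarrow> wit w z = dec w (wit w x, wit w y)})"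

lemma open_Pt: "open (Pt H e t)"
proof -
  obtain x y z where t: "t = (x,y,z)" by (cases t) auto
  have vo: "\<And>B. open B \<Longrightarrow> open (dec -` B)"
    using continuous_on_open_vimage[of UNIV dec] cont_dec by simp
  have o1: "open (dec -` {A. gcond A (x,y,z)})" by (rule vo[OF open_gcond])
  have o2: "open {w. wit w x = wit w y \<longleftrightarrow> e x = e y}"
  proof (rule open_local)
    fix f assume f: "f \<in> {w. wit w x = wit w y \<longleftrightarrow> e x = e y}"
    show "\<exists>K. finite K \<and> (\<forall>g. (\<forall>k\<in>K. g k = f k) \<longrightarrow> g \<in> {w. wit w x = wit w y \<longleftrightarrow> e x = e y})"
      by (rule exI[of _ "{2*x+1, 2*y+1}"]) (use f in \<open>simp add: wit_def\<close>)
  qed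
  have o3: "open {w. e z = e x \<otimes>\<^bsub>H\<^esub> e y \<longrightarrow> wit w z = dec w (wit w x, wit w y)}"
  proof (rule open_local)
    fix f assume f: "f \<in> {w. e z = e x \<otimes>\<^bsub>H\<^esub> e y \<longrightarrow> wit w z = dec w (wit w x, wit w y)}"
    show "\<exists>K. finite K \<and> (\<forall>g. (\<forall>k\<in>K. g k = f k) \<longrightarrow>
             g \<in> {w. e z = e x \<otimes>\<^bsub>H\<^esub> e y \<longrightarrow> wit w z = dec w (wit w x, wit w y)})"
      by (rule exI[of _ "{2*x+1, 2*y+1, 2*z+1, 2 * prod_encode (f (2*x+1), f (2*y+1))}"])
         (use f in \<open>simp add: wit_def dec_def\<close>)
  qed
  show ?thesis unfolding Pt_def t using o1 o2 o3 by (simp add: open_Int)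
qed

definition Cset :: "('h, 'c) monoid_scheme \<Rightarrow> (nat \<Rightarrow> 'h) \<Rightarrow> (nat \<Rightarrow> nat) set" where
  "Cset H e = {w. dec w \<in> group_tables \<and> Cw H e (dec w) (wit w)}"

lemma Cset_Inter: "Cset H e = (\<Inter>t. Pt H e t)"
proof -
  have "w \<in> Cset H e \<longleftrightarrow> (\<forall>t. w \<in> Pt H e t)" for w
  proof -
    have "w \<in> Cset H e \<longleftrightarrow> (\<forall>t. gcond (dec w) t) \<and> Cw H e (dec w) (wit w)"
      unfolding Cset_def using group_tables_Inter by auto
    also have "\<dots> \<longleftrightarrow> (\<forall>t. w \<in> Pt H e t)"
      unfolding Cw_def Pt_def by auto
    finally show ?thesis .
  qed
  then show ?thesis by blast
qed

lemma dec_Cset: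
  fixes H :: "('h, 'c) monoid_scheme" and e :: "nat \<Rightarrow> 'h"
  assumes H: "group H" and e: "range e = carrier H"
  shows "dec ` Cset H e = {G \<in> group_tables. embeddable H (table_group G)}"
proof
  show "dec ` Cset H e \<subseteq> {G \<in> group_tables. embeddable H (table_group G)}"
    unfolding Cset_def using E_char[OF H e] by auto
  show "{G \<in> group_tables. embeddable H (table_group G)} \<subseteq> dec ` Cset H e"
  proof
    fix G assume G: "G \<in> {G \<in> group_tables. embeddable H (table_group G)}"
    then obtain x where x: "Cw H e G x" using E_char[OF H e] by blast
    define w where "w n = (if even n then G (prod_decode (n div 2)) else x (n div 2))" for n
    have dw: "dec w = G" unfolding dec_def w_def by (simp add: fun_eq_iff)
    have ww: "wit w = x" unfolding wit_def w_def by (simp add: fun_eq_iff)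
    have "w \<in> Cset H e" unfolding Cset_def using G x by (simp add: dw ww)
    then show "G \<in> dec ` Cset H e" using dw by (metis imageI)
  qed
qed

lemma analytic_part:
  fixes H :: "('h, 'c) monoid_scheme" and e :: "nat \<Rightarrow> 'h"
  assumes H: "group H" and e: "range e = carrier H"
  shows "analytic_in YG {G \<in> group_tables. embeddable H (table_group G)}"
proof (rule analytic_from[where P = "top_of_set (Cset H e)" and g = dec and j = "\<lambda>w n. real (w n)"])
  have cms: "completely_metrizable_space (top_of_set (Cset H e))"
    by (rule completely_metrizable_space_gdelta_in_alt[OF cms_fun])
       (rule gdelta_local[OF open_Pt Cset_Inter])
  have sep: "separable_space (top_of_set (Cset H e))"
    by (intro second_countable_imp_separable_space second_countable_subtopology second_countable_fun)
  show "Polish_space (top_of_set (Cset H e))" unfolding Polish_space_def using cms sep by simp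
  show "continuous_map (top_of_set (Cset H e)) YG dec"
    unfolding continuous_map_subtopology_eu using cont_dec by (auto simp: Cset_def)
  show "dec ` topspace (top_of_set (Cset H e)) = {G \<in> group_tables. embeddable H (table_group G)}"
    using dec_Cset[OF H e] by simp
  show "inj_on (\<lambda>w n. real (w n)) (topspace (top_of_set (Cset H e)))"
    by (auto simp: inj_on_def fun_eq_iff)
qed



theorem theorem5p7:
  fixes H :: "('h, 'c) monoid_scheme"
  assumes "group H"
  defines "E \<equiv> {G \<in> group_tables. embeddable H (table_group G)}"
  shows "analytic_in (top_of_set group_tables) E \<and>
         (meager_in (top_of_set group_tables) E \<or> comeager_in (top_of_set group_tables) E)"
proof (cases "countable (carrier H)")
  case True
  have ne: "carrier H \<noteq> {}"
    using monoid.one_closed[OF group.is_monoid[OF assms(1)]] by blast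
  define e where "e = from_nat_into (carrier H)"
  have e: "range e = carrier H" unfolding e_def using range_from_nat_into[OF ne True] .
  show ?thesis unfolding E_def using analytic_part[OF assms(1) e] baire_part[OF assms(1) e] by simp
next
  case False
  have E0: "E = {}"
  proof (rule ccontr)
    assume "E \<noteq> {}"
    then obtain G where "G \<in> E" by blast
    then obtain f :: "'h \<Rightarrow> nat" where f: "inj_on f (carrier H)"
      unfolding E_def embeddable_def table_group_def by auto
    have "countable (f ` carrier H)" by (rule countableI_type)
    then have "countable (carrier H)" using countable_image_inj_on f by blast
    then show False using False by simp
  qed
  have an: "analytic_in (top_of_set group_tables) {}"
    unfolding analytic_in_def
  proof (intro exI conjI)
    show "Polish_space (discrete_topology {} :: (nat \<Rightarrow> real) topology)"
      unfolding Polish_space_def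
      by (simp add: completely_metrizable_space_discrete_topology separable_space_discrete_topology)
    show "{} \<in> borel_sets_of (discrete_topology {} :: (nat \<Rightarrow> real) topology)"
      unfolding borel_sets_of_def by (rule sigma_sets.Empty)
    show "continuous_map (subtopology (discrete_topology {} :: (nat \<Rightarrow> real) topology) {})
            (top_of_set group_tables) (\<lambda>_. undefined)"
      by (simp add: continuous_map_def)
    show "(\<lambda>_. undefined) ` {} = ({} :: (nat \<times> nat \<Rightarrow> nat) set)" by simp
  qed
  show ?thesis using an meager_empty unfolding E0 by blast
qed

end
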